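(* Let $M\in\mathbb{R}^{n\times n}$ be a P$_s$-matrix all of whose entries are nonnegative, let $q\in\mathbb{R}^n$, and let $\theta:=\{i\in\{1,\dots,n\}:q_i<0\}$. If $|\theta|\le s$, then $\mathrm{sol}(M,q)\cap S$ is nonempty and contains exactly one element $x^*$ with $\mathrm{supp}(x^* )\subseteq\theta$.
   Context: A P$_s$-matrix is a square matrix all of whose principal minors of order up to $s$ are positive. $\mathrm{sol}(M,q)=\{x: x\ge0,\ Mx+q\ge0,\ \langle x,Mx+q\rangle=0\}$; $S=\{x\in\mathbb{R}^n:\|x\|_0\le s\}$ with $\|x\|_0$ the number of nonzero entries; $\mathrm{supp}(x)=\{i:x_i\ne0\}$. *)

theory Defs
  imports "HOL-Analysis.Analysis"
begin

definition principal_minor :: "real^'n^'n \<Rightarrow> 'n set \<Rightarrow> real" where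
  "principal_minor M I =
     (\<Sum>p\<in>{p. p permutes I}. of_int (sign p) * (\<Prod>i\<in>I. M $ i $ p i))"

definition P_s_matrix :: "nat \<Rightarrow> real^'n^'n \<Rightarrow> bool" where
  "P_s_matrix s M \<longleftrightarrow>
     (\<forall>I::'n set. 0 < card I \<and> card I \<le> s \<longrightarrow> principal_minor M I > 0)"

definition lcp_sol :: "real^'n^'n \<Rightarrow> real^'n \<Rightarrow> (real^'n) set" where
  "lcp_sol M q = {x. (\<forall>i. 0 \<le> x $ i) \<and> (\<forall>i. 0 \<le> (M *v x + q) $ i)
                     \<and> x \<bullet> (M *v x + q) = 0}"

definition supp :: "real^'n \<Rightarrow> 'n set" where
  "supp x = {i. x $ i \<noteq> 0}"

definition sparse_set :: "nat \<Rightarrow> (real^'n) set" where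
  "sparse_set s = {x. card (supp x) \<le> s}"

end

theory Submission imports Defs begin

definition pmf' :: "('n \<Rightarrow> 'n \<Rightarrow> real) \<Rightarrow> 'n set \<Rightarrow> real" where
  "pmf' B J = (\<Sum>p\<in>{p. p permutes J}. of_int (sign p) * (\<Prod>i\<in>J. B i (p i)))"

lemma pmf_cong:
  assumes "\<And>i j. i \<in> J \<Longrightarrow> j \<in> J \<Longrightarrow> B i j = B' i j"
  shows "pmf' B J = pmf' B' J"
  unfolding pmf'_def
  by (intro sum.cong refl arg_cong2[where f="(*)"] prod.cong) (auto simp: assms permutes_in_image)

lemma pmf_empty: "pmf' B {} = 1"
  by (simp add: pmf'_def)

lemma perm_fix_eq:
  assumes "a \<in> J"
  shows "{p. p permutes J \<and> p a = a} = {p. p permutes (J - {a})}"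
proof safe
  fix p assume "p permutes J" "p a = a"
  have "\<And>x. x \<in> J - (J - {a}) \<Longrightarrow> p x = x"
  proof -
    fix x assume "x \<in> J - (J - {a})"
    then have "x = a" by blast
    then show "p x = x" using \<open>p a = a\<close> by simp
  qed
  then show "p permutes (J - {a})" by (rule permutes_superset[OF \<open>p permutes J\<close>])
next
  fix p assume "p permutes (J - {a})"
  then show "p permutes J" by (rule permutes_subset) auto
  show "p a = a" using \<open>p permutes (J - {a})\<close> by (rule permutes_not_in) simp
qed

lemma pmf_expand:
  assumes fin: "finite J" and a: "a \<in> J"
    and B': "\<And>i j. B' i j = B i j + (if i = a \<and> j = a then c else 0)"
  shows "pmf' B' J = pmf' B J + c * pmf' B (J - {a})"
proof -
  have fJ: "finite {p. p permutes J}" using fin by (rule finite_permutations)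
  have eq: "(\<Prod>i\<in>J. B' i (p i)) = (\<Prod>i\<in>J. B i (p i)) + (if p a = a then c else 0) * (\<Prod>i\<in>J-{a}. B i (p i))"
    for p
  proof -
    have "(\<Prod>i\<in>J. B' i (p i)) = B' a (p a) * (\<Prod>i\<in>J-{a}. B' i (p i))"
      using fin a by (simp add: prod.remove)
    also have "(\<Prod>i\<in>J-{a}. B' i (p i)) = (\<Prod>i\<in>J-{a}. B i (p i))"
      by (intro prod.cong) (auto simp: B')
    also have "(\<Prod>i\<in>J. B i (p i)) = B a (p a) * (\<Prod>i\<in>J-{a}. B i (p i))"
      using fin a by (simp add: prod.remove)
    ultimately show ?thesis by (simp add: B' algebra_simps)
  qed
  have "pmf' B' J = pmf' B J + (\<Sum>p\<in>{p. p permutes J}. of_int (sign p) * ((if p a = a then c else 0) * (\<Prod>i\<in>J-{a}. B i (p i))))"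
    unfolding pmf'_def eq by (simp add: algebra_simps sum.distrib)
  also have "(\<Sum>p\<in>{p. p permutes J}. of_int (sign p) * ((if p a = a then c else 0) * (\<Prod>i\<in>J-{a}. B i (p i))))
     = (\<Sum>p\<in>{p. p permutes J \<and> p a = a}. c * (of_int (sign p) * (\<Prod>i\<in>J-{a}. B i (p i))))"
    using fJ by (simp add: sum.inter_filter[symmetric] if_distrib if_distribR algebra_simps cong: if_cong)
  also have "\<dots> = c * pmf' B (J - {a})"
    unfolding pmf'_def perm_fix_eq[OF a] by (simp add: sum_distrib_left)
  finally show ?thesis .
qed


lemma det_embed:
  fixes A :: "'n::finite \<Rightarrow> 'n \<Rightarrow> real"
  shows "det ((\<chi> i j. if i \<in> J \<and> j \<in> J then A i j else if i = j then 1 else 0) :: real^'n^'n) = pmf' A J"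
proof -
  let ?N = "(\<chi> i j. if i \<in> J \<and> j \<in> J then A i j else if i = j then 1 else 0) :: real^'n^'n"
  have "det ?N = (\<Sum>p\<in>{p. p permutes (UNIV::'n set)}. of_int (sign p) * (\<Prod>i\<in>UNIV. ?N $ i $ p i))"
    by (simp add: det_def)
  also have "\<dots> = (\<Sum>p\<in>{p. p permutes J}. of_int (sign p) * (\<Prod>i\<in>UNIV. ?N $ i $ p i))"
  proof (rule sum.mono_neutral_right)
    show "finite {p. p permutes (UNIV::'n set)}" by (simp add: finite_permutations)
    show "{p. p permutes J} \<subseteq> {p. p permutes (UNIV::'n set)}" by (auto intro: permutes_subset)
    show "\<forall>p\<in>{p. p permutes UNIV} - {p. p permutes J}. of_int (sign p) * (\<Prod>i\<in>UNIV. ?N $ i $ p i) = 0"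
    proof
      fix p assume p: "p \<in> {p. p permutes (UNIV::'n set)} - {p. p permutes J}"
      have pU: "p permutes (UNIV::'n set)" and pJ: "\<not> p permutes J" using p by auto
      have "\<exists>i. i \<notin> J \<and> p i \<noteq> i"
      proof (rule ccontr)
        assume "\<not> (\<exists>i. i \<notin> J \<and> p i \<noteq> i)"
        then have "\<And>x. x \<in> UNIV - J \<Longrightarrow> p x = x" by blast
        then have "p permutes J" by (rule permutes_superset[OF pU])
        then show False using pJ by contradiction
      qed
      then obtain i where "i \<notin> J" "p i \<noteq> i" by blast
      then have "?N $ i $ p i = 0" by simp
      then have "(\<Prod>i\<in>UNIV. ?N $ i $ p i) = 0" by (intro prod_zero[OF finite]) (rule bexI[OF _ UNIV_I])
      then show "of_int (sign p) * (\<Prod>i\<in>UNIV. ?N $ i $ p i) = 0" by simp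
    qed
  qed
  also have "\<dots> = pmf' A J"
    unfolding pmf'_def
  proof (intro sum.cong refl arg_cong2[where f="(*)"])
    fix p assume p: "p \<in> {p. p permutes J}"
    show "(\<Prod>i\<in>UNIV. ?N $ i $ p i) = (\<Prod>i\<in>J. A i (p i))"
    proof (rule prod.mono_neutral_cong_right)
      show "\<forall>i\<in>UNIV - J. ?N $ i $ p i = 1" using p by (auto simp: permutes_not_in)
      show "\<And>i. i \<in> J \<Longrightarrow> ?N $ i $ p i = A i (p i)" using p by (auto simp: permutes_in_image)
    qed auto
  qed
  finally show ?thesis .
qed

lemma pm_eq: "principal_minor M J = pmf' (\<lambda>i j. M $ i $ j) J"
  by (simp add: principal_minor_def pmf'_def)

lemma pos_lemma:
  fixes M :: "real^'n^'n"
  assumes P: "P_s_matrix s M"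
  shows "finite F \<Longrightarrow> \<forall>l J. (\<forall>i. 0 \<le> l i) \<longrightarrow> (\<forall>i\<in>J. l i \<noteq> 0 \<longrightarrow> i \<in> F) \<longrightarrow> card J \<le> s
     \<longrightarrow> pmf' (\<lambda>i j. M $ i $ j + (if i = j then l i else 0)) J > 0"
proof (induction F rule: finite_induct)
  case empty
  show ?case
  proof (intro allI impI)
    fix l J assume l: "\<forall>i. 0 \<le> (l::'n\<Rightarrow>real) i" "\<forall>i\<in>J. l i \<noteq> 0 \<longrightarrow> i \<in> {}" and c: "card (J::'n set) \<le> s"
    have "pmf' (\<lambda>i j. M $ i $ j + (if i = j then l i else 0)) J = pmf' (\<lambda>i j. M $ i $ j) J"
      using l by (intro pmf_cong) auto
    also have "\<dots> > 0"
    proof (cases "J = {}")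
      case True then show ?thesis by (simp add: pmf_empty)
    next
      case False
      then have "card J > 0" by (simp add: card_gt_0_iff)
      then show ?thesis using P c unfolding P_s_matrix_def pm_eq by blast
    qed
    finally show "pmf' (\<lambda>i j. M $ i $ j + (if i = j then l i else 0)) J > 0" .
  qed
next
  case (insert a F)
  show ?case
  proof (intro allI impI)
    fix l J assume l: "\<forall>i. 0 \<le> (l::'n\<Rightarrow>real) i" "\<forall>i\<in>J. l i \<noteq> 0 \<longrightarrow> i \<in> insert a F" and c: "card (J::'n set) \<le> s"
    show "pmf' (\<lambda>i j. M $ i $ j + (if i = j then l i else 0)) J > 0"
    proof (cases "a \<in> J \<and> l a \<noteq> 0")
      case False
      then show ?thesis using insert.IH l c by auto
    next
      case True
      define l' where "l' = l(a := 0)"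
      have l'1: "\<forall>i. 0 \<le> l' i" using l by (simp add: l'_def)
      have l'2: "\<forall>i\<in>K. l' i \<noteq> 0 \<longrightarrow> i \<in> F" if "K \<subseteq> J" for K
        using l that by (auto simp: l'_def)
      have h1: "pmf' (\<lambda>i j. M $ i $ j + (if i = j then l' i else 0)) J > 0"
        using insert.IH l'1 l'2[of J] c by blast
      have cJ: "card (J - {a}) \<le> s" using c by (meson card_Diff1_le finite le_trans)
      have h2: "pmf' (\<lambda>i j. M $ i $ j + (if i = j then l' i else 0)) (J - {a}) > 0"
        using insert.IH l'1 l'2[of "J - {a}"] cJ by blast
      have "pmf' (\<lambda>i j. M $ i $ j + (if i = j then l i else 0)) J
         = pmf' (\<lambda>i j. M $ i $ j + (if i = j then l' i else 0)) J + l a * pmf' (\<lambda>i j. M $ i $ j + (if i = j then l' i else 0)) (J - {a})"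
        by (rule pmf_expand) (use True in \<open>auto simp: l'_def\<close>)
      moreover have "l a * pmf' (\<lambda>i j. M $ i $ j + (if i = j then l' i else 0)) (J - {a}) \<ge> 0"
        using l h2 by simp
      ultimately show ?thesis using h1 by linarith
    qed
  qed
qed


lemma sign_rev:
  fixes M :: "real^'n^'n" and d :: "real^'n"
  assumes P: "P_s_matrix s M" and c: "card (supp d) \<le> s"
    and sr: "\<forall>i. d $ i * (M *v d) $ i \<le> 0"
  shows "d = 0"
proof -
  define J where "J = supp d"
  define e where "e = M *v d"
  define l where "l i = (if i \<in> J then - (e $ i) / (d $ i) else 0)" for i
  have l0: "\<forall>i. 0 \<le> l i"
  proof
    fix i
    show "0 \<le> l i"
    proof (cases "i \<in> J")
      case True
      then have "d $ i \<noteq> 0" by (simp add: J_def supp_def)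
      have "- (e $ i) / d $ i = - (d $ i * e $ i) / (d $ i * d $ i)"
        using \<open>d $ i \<noteq> 0\<close> by (simp add: field_simps)
      also have "\<dots> \<ge> 0"
      proof -
        have "d $ i * d $ i > 0" using \<open>d $ i \<noteq> 0\<close> not_real_square_gt_zero by blast
        moreover have "- (d $ i * e $ i) \<ge> 0" using sr[rule_format, of i] by (simp add: e_def)
        ultimately show ?thesis using divide_nonneg_pos by blast
      qed
      finally show ?thesis using True by (simp add: l_def)
    qed (simp add: l_def)
  qed
  define A where "A i j = M $ i $ j + (if i = j then l i else 0)" for i j
  have pos: "pmf' A J > 0"
    unfolding A_def using pos_lemma[OF P, of UNIV] l0 c by (simp add: J_def)
  define N where "N = ((\<chi> i j. if i \<in> J \<and> j \<in> J then A i j else if i = j then 1 else 0) :: real^'n^'n)"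
  have "det N \<noteq> 0" using det_embed[of J A] pos by (simp add: N_def)
  then obtain B where B: "B ** N = mat 1"
    using invertible_det_nz invertible_left_inverse by blast
  have Nd: "N *v d = 0"
  proof -
    have "(N *v d) $ i = 0" for i
    proof (cases "i \<in> J")
      case True
      then have di: "d $ i \<noteq> 0" by (simp add: J_def supp_def)
      have "(N *v d) $ i = (\<Sum>j\<in>UNIV. (if j \<in> J then A i j else 0) * d $ j)"
        using True by (simp add: N_def matrix_vector_mult_def, intro sum.cong) auto
      also have "\<dots> = (\<Sum>j\<in>UNIV. A i j * d $ j)"
        by (intro sum.cong) (auto simp: J_def supp_def)
      also have "\<dots> = (\<Sum>j\<in>UNIV. M $ i $ j * d $ j) + l i * d $ i"
      proof -
        have "(\<Sum>j\<in>UNIV. A i j * d $ j) = (\<Sum>j\<in>UNIV. M $ i $ j * d $ j + (if j = i then l i * d $ i else 0))"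
          by (intro sum.cong) (auto simp: A_def algebra_simps)
        also have "\<dots> = (\<Sum>j\<in>UNIV. M $ i $ j * d $ j) + l i * d $ i"
          by (simp add: sum.distrib)
        finally show ?thesis .
      qed
      also have "\<dots> = e $ i + l i * d $ i" by (simp add: e_def matrix_vector_mult_def)
      also have "\<dots> = 0" using True di by (simp add: l_def)
      finally show ?thesis .
    next
      case False
      then have "(N *v d) $ i = (\<Sum>j\<in>UNIV. (if i = j then 1 else 0) * d $ j)"
        by (simp add: N_def matrix_vector_mult_def)
      also have "\<dots> = (\<Sum>j\<in>UNIV. if i = j then d $ j else 0)"
        by (intro sum.cong) auto
      also have "\<dots> = d $ i" by simp
      also have "\<dots> = 0" using False by (simp add: J_def supp_def)
      finally show ?thesis .
    qed
    then show ?thesis by (simp add: vec_eq_iff)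
  qed
  show ?thesis using matrix_left_invertible_ker[of N] B Nd by blast
qed

lemma exist_sol:
  fixes M :: "real^'n^'n" and q :: "real^'n"
  assumes Mnn: "\<forall>i j. 0 \<le> M $ i $ j" and diag: "\<forall>i. q $ i < 0 \<longrightarrow> M $ i $ i > 0"
  shows "\<exists>x. x \<in> lcp_sol M q \<and> supp x \<subseteq> {i. q $ i < 0}"
proof -
  define T where "T = {i. q $ i < 0}"
  define C where "C = (\<Sum>i\<in>T. - q $ i / M $ i $ i)"
  define R where "R = C + 1"
  have C0: "C \<ge> 0" unfolding C_def T_def
    using diag by (intro sum_nonneg) (simp add: divide_nonpos_pos)
  define K where "K = {x::real^'n. (\<forall>i. 0 \<le> x $ i) \<and> (\<forall>i. i \<notin> T \<longrightarrow> x $ i = 0) \<and> (\<Sum>i\<in>UNIV. x $ i) \<le> R}"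
  have K0: "0 \<in> K" using C0 by (simp add: K_def R_def)
  have Kne: "K \<noteq> {}" using K0 by blast
  have closedK: "closed K"
  proof -
    have "K = (\<Inter>i. {x. 0 \<le> x $ i}) \<inter> (\<Inter>i\<in>-T. {x. x $ i = 0}) \<inter> {x. (\<Sum>i\<in>UNIV. x $ i) \<le> R}"
      by (auto simp: K_def)
    moreover have "closed {x::real^'n. (\<Sum>i\<in>UNIV. x $ i) \<le> R}"
      by (intro closed_Collect_le continuous_intros)
    moreover have "closed {x::real^'n. 0 \<le> x $ i}" for i
      by (intro closed_Collect_le continuous_intros)
    moreover have "closed {x::real^'n. x $ i = 0}" for i
      by (intro closed_Collect_eq continuous_intros)
    ultimately show ?thesis by (auto intro!: closed_Int closed_INT)
  qed
  have boundedK: "bounded K"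
  proof (rule boundedI)
    fix x assume x: "x \<in> K"
    have "norm x \<le> (\<Sum>i\<in>UNIV. \<bar>x $ i\<bar>)" by (rule norm_le_l1_cart)
    also have "\<dots> = (\<Sum>i\<in>UNIV. x $ i)" using x by (simp add: K_def)
    also have "\<dots> \<le> R" using x by (simp add: K_def)
    finally show "norm x \<le> R" .
  qed
  have convexK: "convex K"
  proof (rule convexI)
    fix x y :: "real^'n" and u v :: real
    assume x: "x \<in> K" and y: "y \<in> K" and u: "0 \<le> u" and v: "0 \<le> v" and uv: "u + v = 1"
    have "(\<Sum>i\<in>UNIV. (u *\<^sub>R x + v *\<^sub>R y) $ i) = u * (\<Sum>i\<in>UNIV. x $ i) + v * (\<Sum>i\<in>UNIV. y $ i)"
      by (simp add: sum.distrib sum_distrib_left)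
    also have "\<dots> \<le> u * R + v * R"
      using x y u v by (intro add_mono mult_left_mono) (auto simp: K_def)
    also have "\<dots> = R" using uv by (metis distrib_right mult_1 mult.commute)
    finally show "u *\<^sub>R x + v *\<^sub>R y \<in> K" using x y u v by (auto simp: K_def)
  qed
  define f where "f x = closest_point K (x - (M *v x + q))" for x
  have contf: "continuous_on K f"
    unfolding f_def
    by (rule continuous_on_compose2[OF continuous_on_closest_point[OF convexK closedK Kne, of UNIV]])
       (auto intro!: continuous_intros simp: matrix_vector_mult_linear_continuous_on)
  have fK: "f \<in> K \<rightarrow> K"
    unfolding f_def using closest_point_in_set[OF closedK Kne] by blast
  obtain x where xK: "x \<in> K" and fx: "f x = x"
    using brouwer[OF compact_eq_bounded_closed[THEN iffD2, OF conjI[OF boundedK closedK]] convexK Kne contf fK]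
    by blast
  define w where "w = M *v x + q"
  have VI: "w \<bullet> (y - x) \<ge> 0" if y: "y \<in> K" for y
  proof -
    have "inner ((x - w) - x) (y - x) \<le> 0"
    proof (rule any_closest_point_dot[OF convexK closedK xK y])
      show "\<forall>z\<in>K. dist (x - w) x \<le> dist (x - w) z"
        using closest_point_le[OF closedK] fx unfolding f_def w_def by metis
    qed
    then show ?thesis by (simp add: inner_minus_left)
  qed
  have ax: "(c *\<^sub>R axis j (1::real) :: real^'n) $ k = (if k = j then c else 0)" for c j k
    by (simp add: axis_def)
  have sumax: "(\<Sum>k\<in>UNIV. (c *\<^sub>R axis j (1::real) :: real^'n) $ k) = c" for c j
    by (simp only: ax) simp
  have innax: "w \<bullet> (c *\<^sub>R axis j (1::real) :: real^'n) = c * w $ j" for c j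
    by (simp add: inner_axis)
  have xnn: "\<forall>i. 0 \<le> x $ i" and xT: "\<forall>i. i \<notin> T \<longrightarrow> x $ i = 0"
    and xR: "(\<Sum>i\<in>UNIV. x $ i) \<le> R" using xK by (auto simp: K_def)
  have wneg: "w $ j \<le> 0" if xj: "x $ j > 0" for j
  proof -
    define y where "y = x - (x $ j) *\<^sub>R axis j (1::real)"
    have "(\<Sum>i\<in>UNIV. y $ i) = (\<Sum>i\<in>UNIV. x $ i) - x $ j"
      unfolding y_def by (simp add: sum_subtractf sumax del: vector_scaleR_component)
    then have "y \<in> K" using xnn xT xR xj by (auto simp: K_def y_def axis_def)
    then have "w \<bullet> (y - x) \<ge> 0" by (rule VI)
    then have "- (x $ j * w $ j) \<ge> 0" by (simp add: y_def inner_axis)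
    then show ?thesis using xj by (simp add: mult_le_0_iff)
  qed
  have Mx_ge: "(M *v x) $ j \<ge> M $ j $ j * x $ j" for j
  proof -
    have "M $ j $ j * x $ j \<le> (\<Sum>k\<in>UNIV. M $ j $ k * x $ k)"
      by (rule member_le_sum[where f="\<lambda>k. M $ j $ k * x $ k"]) (use Mnn xnn in auto)
    then show ?thesis by (simp add: matrix_vector_mult_def)
  qed
  have xb: "x $ j \<le> - q $ j / M $ j $ j" if jT: "j \<in> T" for j
  proof (cases "x $ j > 0")
    case True
    have d: "M $ j $ j > 0" using diag jT by (simp add: T_def)
    have "M $ j $ j * x $ j \<le> - q $ j" using wneg[OF True] Mx_ge[of j] by (simp add: w_def)
    then show ?thesis using d by (simp add: field_simps)
  next
    case False
    then have "x $ j = 0" using xnn[rule_format, of j] by linarith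
    then show ?thesis using diag jT by (simp add: T_def divide_nonpos_pos)
  qed
  have sumx: "(\<Sum>i\<in>UNIV. x $ i) < R"
  proof -
    have "(\<Sum>i\<in>UNIV. x $ i) = (\<Sum>i\<in>T. x $ i)"
      by (rule sum.mono_neutral_right) (use xT in auto)
    also have "\<dots> \<le> C" unfolding C_def by (intro sum_mono xb)
    finally show ?thesis by (simp add: R_def)
  qed
  have wpos: "w $ i \<ge> 0" if iT: "i \<in> T" for i
  proof -
    define c where "c = R - (\<Sum>i\<in>UNIV. x $ i)"
    have c0: "c > 0" using sumx by (simp add: c_def)
    define y where "y = x + c *\<^sub>R axis i (1::real)"
    have "(\<Sum>i\<in>UNIV. y $ i) = (\<Sum>i\<in>UNIV. x $ i) + c"
      unfolding y_def by (simp add: sum.distrib sumax del: vector_scaleR_component)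
    then have "y \<in> K" using xnn xT c0 iT by (auto simp: K_def y_def axis_def c_def)
    then have "w \<bullet> (y - x) \<ge> 0" by (rule VI)
    then have "c * w $ i \<ge> 0" by (simp add: y_def inner_axis)
    then show ?thesis using c0 by (simp add: zero_le_mult_iff)
  qed
  have wall: "w $ i \<ge> 0" for i
  proof (cases "i \<in> T")
    case False
    have "(M *v x) $ i \<ge> 0" unfolding matrix_vector_mult_def
      using Mnn xnn by (simp add: sum_nonneg)
    then show ?thesis using False by (simp add: w_def T_def)
  qed (rule wpos)
  have comp: "x $ i * w $ i = 0" for i
  proof (cases "x $ i > 0")
    case True then show ?thesis using wneg[OF True] wall[of i] by simp
  next
    case False then have "x $ i = 0" using xnn[rule_format, of i] by linarith then show ?thesis by simp
  qed
  have "x \<in> lcp_sol M q"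
  proof -
    have "x \<bullet> w = 0" unfolding inner_vec_def inner_real_def by (rule sum.neutral) (metis comp mult.commute)
    then show ?thesis unfolding lcp_sol_def using xnn wall by (simp add: w_def)
  qed
  moreover have "supp x \<subseteq> {i. q $ i < 0}" using xT by (auto simp: supp_def T_def)
  ultimately show ?thesis by blast
qed
lemma comp_each:
  assumes "x \<in> lcp_sol M q"
  shows "x $ i * (M *v x + q) $ i = 0"
proof -
  have nn: "\<forall>i. 0 \<le> x $ i * (M *v x + q) $ i" using assms by (simp add: lcp_sol_def)
  have "(\<Sum>i\<in>UNIV. x $ i * (M *v x + q) $ i) = 0"
    using assms by (simp add: lcp_sol_def inner_vec_def)
  then show ?thesis using nn by (simp add: sum_nonneg_eq_0_iff)
qed

theorem theorem4p3:
  fixes M :: "real^'n^'n" and q :: "real^'n" and s :: nat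
  assumes "P_s_matrix s M"
    and "\<forall>i j. 0 \<le> M $ i $ j"
    and "card {i. q $ i < 0} \<le> s"
  shows "lcp_sol M q \<inter> sparse_set s \<noteq> {}
    \<and> (\<exists>!x. x \<in> lcp_sol M q \<inter> sparse_set s \<and> supp x \<subseteq> {i. q $ i < 0})"
proof -
  let ?T = "{i. q $ i < 0}"
  have diag: "\<forall>i. q $ i < 0 \<longrightarrow> M $ i $ i > 0"
  proof (intro allI impI)
    fix i assume "q $ i < 0"
    then have "card {i} \<le> card ?T" by (intro card_mono) auto
    then have "card {i} \<le> s" using assms(3) by linarith
    then have "principal_minor M {i} > 0" using assms(1) unfolding P_s_matrix_def by simp
    then show "M $ i $ i > 0" by (simp add: principal_minor_def)
  qed
  obtain x where x: "x \<in> lcp_sol M q" "supp x \<subseteq> ?T"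
    using exist_sol[OF assms(2) diag] by blast
  have sp: "z \<in> sparse_set s" if "supp z \<subseteq> ?T" for z
  proof -
    have "card (supp z) \<le> card ?T" using that by (intro card_mono) auto
    then show ?thesis using assms(3) by (simp add: sparse_set_def)
  qed
  have uniq: "y = x" if y: "y \<in> lcp_sol M q" "supp y \<subseteq> ?T" for y
  proof -
    define d where "d = y - x"
    have "supp d \<subseteq> ?T"
    proof
      fix i assume "i \<in> supp d"
      then have "y $ i \<noteq> 0 \<or> x $ i \<noteq> 0" by (auto simp: supp_def d_def)
      then show "i \<in> ?T" using x(2) y(2) by (auto simp: supp_def)
    qed
    then have cd: "card (supp d) \<le> s" using assms(3) by (meson card_mono finite le_trans)
    have "d $ i * (M *v d) $ i \<le> 0" for i
    proof -
      have e: "(M *v d) $ i = (M *v y + q) $ i - (M *v x + q) $ i"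
        by (simp add: d_def matrix_vector_mult_diff_distrib)
      have c1: "x $ i * (M *v x + q) $ i = 0" by (rule comp_each[OF x(1)])
      have c2: "y $ i * (M *v y + q) $ i = 0" by (rule comp_each[OF y(1)])
      have n1: "0 \<le> x $ i" "0 \<le> (M *v x + q) $ i" using x(1) by (auto simp: lcp_sol_def)
      have n2: "0 \<le> y $ i" "0 \<le> (M *v y + q) $ i" using y(1) by (auto simp: lcp_sol_def)
      have "d $ i * (M *v d) $ i = - (y $ i * (M *v x + q) $ i) - x $ i * (M *v y + q) $ i"
        unfolding e using c1 c2 by (simp add: d_def algebra_simps)
      also have "\<dots> \<le> 0"
      proof -
        have "0 \<le> y $ i * (M *v x + q) $ i" using n1 n2 by simp
        moreover have "0 \<le> x $ i * (M *v y + q) $ i" using n1 n2 by simp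
        ultimately show ?thesis by linarith
      qed
      finally show ?thesis .
    qed
    then have "d = 0" using sign_rev[OF assms(1) cd] by blast
    then show ?thesis by (simp add: d_def)
  qed
  show ?thesis
    using x sp[OF x(2)] uniq sp by blast
qed

end
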